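(* Let $\psi\in C^\infty(P)$ be strongly convex and, for $s\in\mathbb R$, let $g_s=g_P+s\psi$ with Hessian $H_s$ on $\check P$. Let $K$ be a compact subset of $\check P$. Then there exist $s_K\ge0$ and, for every $t<-s_K$, a negative-definite island $U^K_t$ of $g_t$ with $K\subset U^K_t$, such that $U^K_t\subseteq U^K_{t'}$ whenever $t'<t<-s_K$. Moreover $\bigcup_{t<-s_K}U^K_t=\check P$.
   Context: Let $P=\{x\in\mathbb R^n:\ell_j(x)=\langle\nu_j,x\rangle+\lambda_j\ge0,\ j=1,\dots,r\}$ be a Delzant polytope with interior $\check P$, and $g_P=\frac12\sum_{j=1}^r\ell_j\log\ell_j$ on $\check P$. Strongly convex means the Hessian of $\psi$ is positive definite on $P$. For $s\in\mathbb R$, a negative-definite island of $g_s$ is a connected component of the open set $\{x\in\check P: H_s(x)\text{ is negative definite}\}$. *)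

theory Defs
  imports "HOL-Analysis.Analysis"
begin

definition aff_fun :: "(nat \<Rightarrow> real^'n) \<Rightarrow> (nat \<Rightarrow> real) \<Rightarrow> nat \<Rightarrow> real^'n \<Rightarrow> real" where
  "aff_fun \<nu> lam j x = \<nu> j \<bullet> x + lam j"

definition polytope_of :: "(nat \<Rightarrow> real^'n) \<Rightarrow> (nat \<Rightarrow> real) \<Rightarrow> nat \<Rightarrow> (real^'n) set" where
  "polytope_of \<nu> lam r = {x. \<forall>j<r. aff_fun \<nu> lam j x \<ge> 0}"

definition int_vec :: "real^'n \<Rightarrow> bool" where
  "int_vec v \<longleftrightarrow> (\<forall>i. v $ i \<in> \<int>)"

definition primitive_vec :: "real^'n \<Rightarrow> bool" where
  "primitive_vec v \<longleftrightarrow> int_vec v \<and> v \<noteq> 0 \<and>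
     (\<forall>m::nat. m > 1 \<longrightarrow> \<not> int_vec (inverse (real m) *\<^sub>R v))"

definition delzant :: "(nat \<Rightarrow> real^'n) \<Rightarrow> (nat \<Rightarrow> real) \<Rightarrow> nat \<Rightarrow> bool" where
  "delzant \<nu> lam r \<longleftrightarrow>
     (let P = polytope_of \<nu> lam r;
          F = (\<lambda>j. {x \<in> P. aff_fun \<nu> lam j x = 0}) in
     bounded P \<and> interior P \<noteq> {} \<and>
     (\<forall>j<r. primitive_vec (\<nu> j)) \<and>
     (\<forall>j<r. F j face_of P \<and> aff_dim (F j) = int CARD('n) - 1) \<and>
     (\<forall>j<r. \<forall>k<r. j \<noteq> k \<longrightarrow> F j \<noteq> F k) \<and>
     (\<forall>v. v extreme_point_of P \<longrightarrow>
        (let J = {j. j < r \<and> aff_fun \<nu> lam j v = 0} in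
          card J = CARD('n) \<and>
          (\<forall>z::real^'n. int_vec z \<longrightarrow>
             (\<exists>c. (\<forall>j\<in>J. c j \<in> \<int>) \<and> z = (\<Sum>j\<in>J. c j *\<^sub>R \<nu> j))))))"

text \<open>g_P = 1/2 sum_j l_j log l_j (relevant on the interior of P).\<close>

definition g_P :: "(nat \<Rightarrow> real^'n) \<Rightarrow> (nat \<Rightarrow> real) \<Rightarrow> nat \<Rightarrow> real^'n \<Rightarrow> real" where
  "g_P \<nu> lam r x = (1/2) * (\<Sum>j<r. aff_fun \<nu> lam j x * ln (aff_fun \<nu> lam j x))"

text \<open>C^infinity on an open set U: there is a family F of functions indexed by
  multi-indices (lists of coordinate directions) with F [] = f, such that every F alpha
  is (Frechet) differentiable on U with partial derivative in direction i given by
  F (i # alpha). This says all partial derivatives of all orders exist and are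
  differentiable, i.e. f is smooth.\<close>

definition smooth_on :: "(real^'n) set \<Rightarrow> (real^'n \<Rightarrow> real) \<Rightarrow> bool" where
  "smooth_on U f \<longleftrightarrow> (\<exists>F :: 'n list \<Rightarrow> real^'n \<Rightarrow> real. F [] = f \<and>
     (\<forall>\<alpha>. \<forall>x\<in>U. (F \<alpha> has_derivative (\<lambda>h. \<Sum>i\<in>UNIV. h $ i * F (i # \<alpha>) x)) (at x)))"

definition partial :: "'n \<Rightarrow> (real^'n \<Rightarrow> real) \<Rightarrow> real^'n \<Rightarrow> real" where
  "partial i f x = deriv (\<lambda>t. f (x + t *\<^sub>R axis i 1)) 0"

definition hessian :: "(real^'n \<Rightarrow> real) \<Rightarrow> real^'n \<Rightarrow> real^'n^'n" where
  "hessian f x = (\<chi> i j. partial i (partial j f) x)"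

definition pos_def :: "real^'n^'n \<Rightarrow> bool" where
  "pos_def A \<longleftrightarrow> (\<forall>v. v \<noteq> 0 \<longrightarrow> v \<bullet> (A *v v) > 0)"

definition neg_def :: "real^'n^'n \<Rightarrow> bool" where
  "neg_def A \<longleftrightarrow> (\<forall>v. v \<noteq> 0 \<longrightarrow> v \<bullet> (A *v v) < 0)"

definition neg_islands :: "(real^'n) set \<Rightarrow> (real^'n \<Rightarrow> real) \<Rightarrow> (real^'n) set set" where
  "neg_islands P g = components {x \<in> interior P. neg_def (hessian g x)}"

end

theory Submission
  imports Defs
begin

lemma partial_eqI:
  "((\<lambda>s. f (x + s *\<^sub>R axis i 1)) has_real_derivative D) (at 0) \<Longrightarrow> partial i f x = D"
  unfolding partial_def by (rule DERIV_imp_deriv)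

lemma partial_cong:
  assumes "open S" "x \<in> S" "\<And>y. y \<in> S \<Longrightarrow> f y = g y"
  shows "partial i f x = partial i g x"
proof -
  have op: "open ((\<lambda>s::real. x + s *\<^sub>R axis i 1) -` S)"
    by (rule continuous_open_vimage[OF assms(1)]) (intro allI continuous_intros)
  have ev: "eventually (\<lambda>s. f (x + s *\<^sub>R axis i 1) = g (x + s *\<^sub>R axis i 1)) (nhds 0)"
    using eventually_nhds_in_open[OF op] assms(2,3)
    by (smt (verit, best) add.right_neutral eventually_mono scale_zero_left vimageE vimageI)
  have "\<And>D. ((\<lambda>s. f (x + s *\<^sub>R axis i 1)) has_real_derivative D) (at 0) \<longleftrightarrow>
             ((\<lambda>s. g (x + s *\<^sub>R axis i 1)) has_real_derivative D) (at 0)"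
    by (rule DERIV_cong_ev[OF refl ev refl])
  then show ?thesis unfolding partial_def deriv_def by simp
qed

lemma frechet_partial:
  fixes f :: "real^'n \<Rightarrow> real"
  assumes "(f has_derivative (\<lambda>h. \<Sum>i\<in>UNIV. h $ i * D i)) (at x)"
  shows "((\<lambda>s. f (x + s *\<^sub>R axis k 1)) has_real_derivative D k) (at 0)"
proof -
  have l: "((\<lambda>s::real. x + s *\<^sub>R axis k 1) has_derivative (\<lambda>s. s *\<^sub>R axis k 1)) (at 0)"
    by (auto intro!: derivative_eq_intros)
  have "((f \<circ> (\<lambda>s::real. x + s *\<^sub>R axis k 1)) has_derivative
        ((\<lambda>h. \<Sum>i\<in>UNIV. h $ i * D i) \<circ> (\<lambda>s. s *\<^sub>R axis k 1))) (at 0)"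
    by (rule diff_chain_at[OF l]) (simp add: assms)
  moreover have "((\<lambda>h. \<Sum>i\<in>UNIV. h $ i * D i) \<circ> (\<lambda>s. s *\<^sub>R axis k 1)) = (*) (D k)"
  proof
    fix s :: real
    have "(\<Sum>i\<in>UNIV. (s *\<^sub>R axis k 1) $ i * D i) = (\<Sum>i\<in>UNIV. if i = k then s * D i else 0)"
      by (intro sum.cong) (auto simp: axis_def)
    then show "((\<lambda>h. \<Sum>i\<in>UNIV. h $ i * D i) \<circ> (\<lambda>s. s *\<^sub>R axis k 1)) s = D k * s"
      by simp
  qed
  ultimately show ?thesis
    by (simp add: has_field_derivative_def o_def)
qed

lemma aff_shift: "aff_fun \<nu> lam k (y + s *\<^sub>R axis i 1) = aff_fun \<nu> lam k y + s * \<nu> k $ i"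
  by (simp add: aff_fun_def inner_add_right inner_axis)

lemma aff_pos:
  assumes "y \<in> interior (polytope_of \<nu> lam r)" "k < r" "\<nu> k \<noteq> 0"
  shows "aff_fun \<nu> lam k y > 0"
proof -
  obtain e where e: "e > 0" "ball y e \<subseteq> polytope_of \<nu> lam r"
    using assms(1) by (meson mem_interior)
  define z where "z = y - (e / 2 / norm (\<nu> k)) *\<^sub>R \<nu> k"
  have nz: "norm (\<nu> k) > 0" using assms(3) by simp
  have "dist y z = e / 2" using nz e by (simp add: z_def dist_norm)
  then have "z \<in> polytope_of \<nu> lam r" using e by auto
  then have "aff_fun \<nu> lam k z \<ge> 0" using assms(2) by (simp add: polytope_of_def)
  moreover have "aff_fun \<nu> lam k z = aff_fun \<nu> lam k y - (e/2/norm (\<nu> k)) * (\<nu> k \<bullet> \<nu> k)"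
    by (simp add: z_def aff_fun_def inner_diff_right)
  moreover have "(e/2/norm (\<nu> k)) * (\<nu> k \<bullet> \<nu> k) > 0" using nz e by simp
  ultimately show ?thesis by linarith
qed

definition GG where
  "GG \<nu> lam r j y = (1/2) * (\<Sum>k<r. \<nu> k $ j * (ln (aff_fun \<nu> lam k y) + 1))"

definition HP where
  "HP \<nu> lam r y = (\<chi> i j. (1/2) * (\<Sum>k<r. \<nu> k $ j * \<nu> k $ i / aff_fun \<nu> lam k y))"

lemma gP_deriv:
  assumes "\<forall>k<r. aff_fun \<nu> lam k y > 0"
  shows "((\<lambda>s. g_P \<nu> lam r (y + s *\<^sub>R axis i 1)) has_real_derivative GG \<nu> lam r i y) (at 0)"
proof -
  have "((\<lambda>s. (aff_fun \<nu> lam k y + s * \<nu> k $ i) * ln (aff_fun \<nu> lam k y + s * \<nu> k $ i))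
      has_real_derivative \<nu> k $ i * (ln (aff_fun \<nu> lam k y) + 1)) (at 0)" if "k \<in> {..<r}" for k
    using assms that by (auto intro!: derivative_eq_intros simp: field_simps)
  then have "((\<lambda>s. (1/2) * (\<Sum>k<r. (aff_fun \<nu> lam k y + s * \<nu> k $ i) * ln (aff_fun \<nu> lam k y + s * \<nu> k $ i)))
      has_real_derivative (1/2) * (\<Sum>k<r. \<nu> k $ i * (ln (aff_fun \<nu> lam k y) + 1))) (at 0)"
    by (intro DERIV_cmult DERIV_sum)
  then show ?thesis by (simp add: g_P_def aff_shift GG_def)
qed

lemma GG_deriv:
  assumes "\<forall>k<r. aff_fun \<nu> lam k y > 0"
  shows "((\<lambda>s. GG \<nu> lam r j (y + s *\<^sub>R axis i 1)) has_real_derivative HP \<nu> lam r y $ i $ j) (at 0)"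
proof -
  have "((\<lambda>s. \<nu> k $ j * (ln (aff_fun \<nu> lam k y + s * \<nu> k $ i) + 1))
      has_real_derivative \<nu> k $ j * \<nu> k $ i / aff_fun \<nu> lam k y) (at 0)" if "k \<in> {..<r}" for k
    using assms that by (auto intro!: derivative_eq_intros simp: field_simps)
  then have "((\<lambda>s. (1/2) * (\<Sum>k<r. \<nu> k $ j * (ln (aff_fun \<nu> lam k y + s * \<nu> k $ i) + 1)))
      has_real_derivative (1/2) * (\<Sum>k<r. \<nu> k $ j * \<nu> k $ i / aff_fun \<nu> lam k y)) (at 0)"
    by (intro DERIV_cmult DERIV_sum)
  then show ?thesis by (simp add: GG_def aff_shift HP_def)
qed

lemma hess_psi:
  assumes "open U0" "F [] = \<psi>"
    and FD: "\<forall>\<alpha>. \<forall>x\<in>U0. (F \<alpha> has_derivative (\<lambda>h. \<Sum>i\<in>UNIV. h $ i * F (i # \<alpha>) x)) (at x)"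
    and "y \<in> U0"
  shows "hessian \<psi> y = (\<chi> i j. F [i, j] y)"
proof -
  have p1: "partial j \<psi> z = F [j] z" if "z \<in> U0" for j z
    using frechet_partial[of "F []" "\<lambda>i. F [i] z" z j] FD that assms(2)
    by (auto intro: partial_eqI)
  have "partial i (partial j \<psi>) y = F [i, j] y" for i j
  proof -
    have "partial i (partial j \<psi>) y = partial i (F [j]) y"
      by (rule partial_cong[OF assms(1) assms(4)]) (simp add: p1)
    also have "\<dots> = F [i, j] y"
      using frechet_partial[of "F [j]" "\<lambda>i. F [i, j] y" y i] FD assms(4)
      by (auto intro: partial_eqI)
    finally show ?thesis .
  qed
  then show ?thesis by (simp add: hessian_def)
qed

lemma hess_gt:
  fixes \<nu> :: "nat \<Rightarrow> real^'n"
  assumes "open S" "S \<subseteq> U0" "F [] = \<psi>"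
    and FD: "\<forall>\<alpha>. \<forall>x\<in>U0. (F \<alpha> has_derivative (\<lambda>h. \<Sum>i\<in>UNIV. h $ i * F (i # \<alpha>) x)) (at x)"
    and pos: "\<forall>y\<in>S. \<forall>k<r. aff_fun \<nu> lam k y > 0"
    and "y \<in> S"
  shows "hessian (\<lambda>x. g_P \<nu> lam r x + t * \<psi> x) y = HP \<nu> lam r y + t *\<^sub>R (\<chi> i j. F [i, j] y)"
proof -
  have p1: "partial j (\<lambda>x. g_P \<nu> lam r x + t * \<psi> x) z = GG \<nu> lam r j z + t * F [j] z"
    if "z \<in> S" for j z
  proof (rule partial_eqI)
    have "z \<in> U0" using that assms(2) by auto
    then have "((\<lambda>s. F [] (z + s *\<^sub>R axis j 1)) has_real_derivative F [j] z) (at 0)"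
      using frechet_partial[of "F []" "\<lambda>i. F [i] z" z j] FD by auto
    then show "((\<lambda>s. g_P \<nu> lam r (z + s *\<^sub>R axis j 1) + t * \<psi> (z + s *\<^sub>R axis j 1))
        has_real_derivative GG \<nu> lam r j z + t * F [j] z) (at 0)"
      using gP_deriv[of r \<nu> lam z j] pos that assms(3)
      by (auto intro!: DERIV_add DERIV_cmult)
  qed
  have "partial i (partial j (\<lambda>x. g_P \<nu> lam r x + t * \<psi> x)) y = HP \<nu> lam r y $ i $ j + t * F [i, j] y" for i j
  proof -
    have "partial i (partial j (\<lambda>x. g_P \<nu> lam r x + t * \<psi> x)) y
        = partial i (\<lambda>z. GG \<nu> lam r j z + t * F [j] z) y"
      by (rule partial_cong[OF assms(1) assms(6)]) (simp add: p1)
    also have "\<dots> = HP \<nu> lam r y $ i $ j + t * F [i, j] y"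
    proof (rule partial_eqI)
      have "y \<in> U0" using assms(2,6) by auto
      then have "((\<lambda>s. F [j] (y + s *\<^sub>R axis i 1)) has_real_derivative F [i, j] y) (at 0)"
        using frechet_partial[of "F [j]" "\<lambda>i. F [i, j] y" y i] FD by auto
      then show "((\<lambda>s. GG \<nu> lam r j (y + s *\<^sub>R axis i 1) + t * F [j] (y + s *\<^sub>R axis i 1))
        has_real_derivative HP \<nu> lam r y $ i $ j + t * F [i, j] y) (at 0)"
        using GG_deriv[of r \<nu> lam y j i] pos assms(6)
        by (auto intro!: DERIV_add DERIV_cmult)
    qed
    finally show ?thesis .
  qed
  then show ?thesis by (simp add: hessian_def vec_eq_iff)
qed

lemma qf_expand: "(v::real^'n) \<bullet> (M *v v) = (\<Sum>i\<in>UNIV. v $ i * (\<Sum>j\<in>UNIV. M $ i $ j * v $ j))"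
  by (simp add: inner_vec_def matrix_vector_mult_def)

lemma qf_scale: "(c *\<^sub>R (u::real^'n)) \<bullet> (M *v (c *\<^sub>R u)) = c^2 * (u \<bullet> (M *v u))"
  by (simp add: matrix_vector_mult_scaleR power2_eq_square)

lemma qf_add: "(u::real^'n) \<bullet> ((A + t *\<^sub>R B) *v u) = u \<bullet> (A *v u) + t * (u \<bullet> (B *v u))"
  by (simp add: matrix_vector_mult_add_rdistrib scaleR_matrix_vector_assoc[symmetric] inner_add_right)

lemma quad_bound:
  fixes A B :: "'a::topological_space \<Rightarrow> real^'n^'n"
  assumes "compact C" "continuous_on C A" "continuous_on C B" "\<forall>x\<in>C. pos_def (B x)"
  shows "\<exists>T. \<forall>t<T. \<forall>x\<in>C. neg_def (A x + t *\<^sub>R B x)"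
proof (cases "C = {}")
  case True then show ?thesis by auto
next
  case False
  obtain v0 :: "real^'n" where v0: "norm v0 = 1" using vector_choose_size[of 1] by auto
  define D where "D = C \<times> sphere (0::real^'n) 1"
  have Dne: "D \<noteq> {}" using False v0 by (auto simp: D_def)
  have Dc: "compact D" unfolding D_def using assms(1) by (intro compact_Times compact_sphere)
  define qA where "qA p = snd p \<bullet> (A (fst p) *v snd p)" for p
  define qB where "qB p = snd p \<bullet> (B (fst p) *v snd p)" for p
  have cA: "continuous_on D (\<lambda>p. A (fst p))"
    by (rule continuous_on_compose2[OF assms(2) continuous_on_fst]) (auto simp: D_def)
  have cB: "continuous_on D (\<lambda>p. B (fst p))"
    by (rule continuous_on_compose2[OF assms(3) continuous_on_fst]) (auto simp: D_def)
  have qAc: "continuous_on D qA"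
    unfolding qA_def qf_expand by (intro continuous_intros cA)
  have qBc: "continuous_on D qB"
    unfolding qB_def qf_expand by (intro continuous_intros cB)
  obtain p0 where p0: "p0 \<in> D" "\<forall>p\<in>D. qB p0 \<le> qB p"
    using continuous_attains_inf[OF Dc Dne qBc] by auto
  define m where "m = qB p0"
  have mpos: "m > 0"
    using p0(1) assms(4) unfolding m_def qB_def D_def pos_def_def
    by (metis (no_types, lifting) SigmaE mem_sphere_0 norm_zero prod.sel zero_neq_one)
  have "bounded (qA ` D)" by (rule compact_imp_bounded[OF compact_continuous_image[OF qAc Dc]])
  then obtain M where M: "\<forall>p\<in>D. \<bar>qA p\<bar> \<le> M" by (auto simp: bounded_iff)
  define T where "T = - \<bar>M\<bar> / m"
  have T0: "T \<le> 0" using mpos by (simp add: T_def)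
  have "T * m = - \<bar>M\<bar>" using mpos by (simp add: T_def)
  show ?thesis
  proof (intro exI allI impI ballI)
    fix t x assume t: "t < T" and x: "x \<in> C"
    show "neg_def (A x + t *\<^sub>R B x)"
      unfolding neg_def_def
    proof (intro allI impI)
      fix v :: "real^'n" assume v: "v \<noteq> 0"
      define u where "u = (1 / norm v) *\<^sub>R v"
      have nu: "norm u = 1" using v by (simp add: u_def)
      have vu: "v = norm v *\<^sub>R u" using v by (simp add: u_def)
      have pD: "(x, u) \<in> D" using x nu by (simp add: D_def)
      have a: "qA (x, u) \<le> \<bar>M\<bar>" using M pD by force
      have b: "qB (x, u) \<ge> m" using p0 pD m_def by auto
      have "t * qB (x, u) \<le> t * m" using b t T0 by (intro mult_left_mono_neg) auto
      moreover have "t * m < T * m" using t mpos by simp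
      ultimately have neg: "qA (x, u) + t * qB (x, u) < 0"
        using a \<open>T * m = - \<bar>M\<bar>\<close> by linarith
      have "v \<bullet> ((A x + t *\<^sub>R B x) *v v) = (norm v)^2 * (qA (x, u) + t * qB (x, u))"
        by (subst (1 2) vu, subst qf_scale) (simp add: qf_add qA_def qB_def)
      also have "\<dots> < 0" using neg v by (simp add: mult_pos_neg)
      finally show "v \<bullet> ((A x + t *\<^sub>R B x) *v v) < 0" .
    qed
  qed
qed

theorem mainTheorem8:
  fixes \<nu> :: "nat \<Rightarrow> real^'n" and lam :: "nat \<Rightarrow> real" and r :: nat
    and \<psi> :: "real^'n \<Rightarrow> real" and U0 :: "(real^'n) set" and K :: "(real^'n) set"
  assumes "delzant \<nu> lam r"
    and "open U0" and "polytope_of \<nu> lam r \<subseteq> U0" and "smooth_on U0 \<psi>"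
    and "\<forall>x\<in>polytope_of \<nu> lam r. pos_def (hessian \<psi> x)"
    and "compact K" and "K \<subseteq> interior (polytope_of \<nu> lam r)"
  shows "\<exists>sK \<ge> 0. \<exists>U :: real \<Rightarrow> (real^'n) set.
           (\<forall>t < -sK. U t \<in> neg_islands (polytope_of \<nu> lam r)
                          (\<lambda>x. g_P \<nu> lam r x + t * \<psi> x) \<and> K \<subseteq> U t) \<and>
           (\<forall>t t'. t' < t \<and> t < -sK \<longrightarrow> U t \<subseteq> U t') \<and>
           (\<Union>t\<in>{..< -sK}. U t) = interior (polytope_of \<nu> lam r)"
proof -
  define P where "P = polytope_of \<nu> lam r"
  define S where "S = interior P"
  have Sopen: "open S" by (simp add: S_def)
  have SP: "S \<subseteq> P" by (simp add: S_def interior_subset)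
  have SU: "S \<subseteq> U0" using SP assms(3) P_def by auto
  have del: "interior P \<noteq> {}" "\<forall>j<r. primitive_vec (\<nu> j)"
    using assms(1) unfolding delzant_def Let_def P_def by auto
  have nz: "\<forall>j<r. \<nu> j \<noteq> 0" using del(2) by (simp add: primitive_vec_def)
  have pos: "\<forall>y\<in>S. \<forall>k<r. aff_fun \<nu> lam k y > 0"
    using aff_pos[of _ \<nu> lam r] nz by (auto simp: S_def P_def)
  obtain F :: "'n list \<Rightarrow> real^'n \<Rightarrow> real" where F0: "F [] = \<psi>"
    and FD: "\<forall>\<alpha>. \<forall>x\<in>U0. (F \<alpha> has_derivative (\<lambda>h. \<Sum>i\<in>UNIV. h $ i * F (i # \<alpha>) x)) (at x)"
    using assms(4) unfolding smooth_on_def by blast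
  define HF where "HF y = (\<chi> i j. F [i, j] y)" for y
  have hg: "hessian (\<lambda>x. g_P \<nu> lam r x + t * \<psi> x) y = HP \<nu> lam r y + t *\<^sub>R HF y"
    if "y \<in> S" for t y
    unfolding HF_def by (rule hess_gt[OF Sopen SU F0 FD pos that])
  have hpsi: "pos_def (HF y)" if "y \<in> P" for y
    proof -
    have "y \<in> U0" using that assms(3) P_def by auto
    then have "hessian \<psi> y = HF y" using hess_psi[OF assms(2) F0 FD, of y] HF_def by simp
    then show ?thesis using assms(5) that P_def by metis
  qed
  have cHP: "continuous_on S (HP \<nu> lam r)"
    unfolding HP_def
    using pos by (intro continuous_intros) (auto simp: aff_fun_def intro!: continuous_intros dest: less_imp_neq[THEN not_sym])
  have cHF: "continuous_on S HF"
  proof -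
    have "continuous_on U0 (F [i, j])" for i j
      using FD by (intro continuous_at_imp_continuous_on) (auto dest: has_derivative_continuous)
    then have "continuous_on U0 HF" unfolding HF_def by (intro continuous_intros)
    then show ?thesis using SU continuous_on_subset by blast
  qed
  have convP: "convex P"
    unfolding convex_def P_def polytope_of_def
  proof (intro allI impI ballI; clarsimp)
    fix x y :: "real^'n" and u v :: real and j
    assume x: "\<forall>j<r. 0 \<le> aff_fun \<nu> lam j x" and y: "\<forall>j<r. 0 \<le> aff_fun \<nu> lam j y"
      and uv: "0 \<le> u" "0 \<le> v" "u + v = 1" and j: "j < r"
    have "aff_fun \<nu> lam j (u *\<^sub>R x + v *\<^sub>R y) = u * aff_fun \<nu> lam j x + v * aff_fun \<nu> lam j y"
      using uv(3) by (simp add: aff_fun_def inner_add_right algebra_simps)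
       (metis add.commute mult.commute mult_1 distrib_left)
    then show "0 \<le> aff_fun \<nu> lam j (u *\<^sub>R x + v *\<^sub>R y)"
      using x y uv j by simp
  qed
  have convS: "convex S" using convP by (simp add: S_def)
  define N where "N t = {x \<in> S. neg_def (hessian (\<lambda>x. g_P \<nu> lam r x + t * \<psi> x) x)}" for t
  have key: "\<exists>T. \<forall>t<T. C \<subseteq> N t" if Cc: "compact C" and CS: "C \<subseteq> S" for C
  proof -
    obtain T where T: "\<forall>t<T. \<forall>x\<in>C. neg_def (HP \<nu> lam r x + t *\<^sub>R HF x)"
      using quad_bound[OF Cc continuous_on_subset[OF cHP CS] continuous_on_subset[OF cHF CS]]
        hpsi CS SP by blast
    show ?thesis
    proof (intro exI allI impI subsetI)
      fix t x assume "t < T" "x \<in> C"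
      then show "x \<in> N t" using T hg[of x t] CS by (auto simp: N_def)
    qed
  qed
  have mono: "N t \<subseteq> N t'" if "t' < t" for t t'
  proof
    fix x assume x: "x \<in> N t"
    then have xS: "x \<in> S" by (simp add: N_def)
    have nd: "neg_def (HP \<nu> lam r x + t *\<^sub>R HF x)" using x xS hg by (simp add: N_def)
    have pd: "pos_def (HF x)" using hpsi xS SP by auto
    have "neg_def (HP \<nu> lam r x + t' *\<^sub>R HF x)"
      unfolding neg_def_def
    proof (intro allI impI)
      fix v :: "real^'n" assume v: "v \<noteq> 0"
      have a: "v \<bullet> (HP \<nu> lam r x *v v) + t * (v \<bullet> (HF x *v v)) < 0"
        using nd v by (simp add: neg_def_def qf_add)
      have b: "v \<bullet> (HF x *v v) > 0" using pd v by (simp add: pos_def_def)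
      have "t' * (v \<bullet> (HF x *v v)) < t * (v \<bullet> (HF x *v v))" using b that by simp
      then show "v \<bullet> ((HP \<nu> lam r x + t' *\<^sub>R HF x) *v v) < 0" using a by (simp add: qf_add)
    qed
    then show "x \<in> N t'" using xS hg by (simp add: N_def)
  qed
  obtain x0 where x0: "x0 \<in> S" using del(1) S_def by auto
  define C0 where "C0 = convex hull (insert x0 K)"
  have C0c: "compact C0" unfolding C0_def using assms(6) by (intro compact_convex_hull compact_insert)
  have C0S: "C0 \<subseteq> S" unfolding C0_def using x0 assms(7) convS S_def P_def
    by (intro hull_minimal) auto
  obtain T0 where T0: "\<forall>t<T0. C0 \<subseteq> N t" using key[OF C0c C0S] by blast
  define sK where "sK = max 0 (- T0)"
  define U where "U t = connected_component_set (N t) x0" for t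
  have x0C0: "x0 \<in> C0" unfolding C0_def by (simp add: hull_inc)
  have KC0: "K \<subseteq> C0" unfolding C0_def by (meson hull_subset subset_insertI subset_trans)
  have conC0: "connected C0" unfolding C0_def by (simp add: convex_connected)
  have C0U: "C0 \<subseteq> U t" if "t < -sK" for t
  proof -
    have "t < T0" using that sK_def by auto
    then have "C0 \<subseteq> N t" using T0 by auto
    then show ?thesis unfolding U_def by (rule connected_component_maximal[OF x0C0 conC0])
  qed
  show ?thesis
  proof (intro exI[of _ sK] conjI exI[of _ U])
    show "0 \<le> sK" by (simp add: sK_def)
    show "\<forall>t < -sK. U t \<in> neg_islands (polytope_of \<nu> lam r) (\<lambda>x. g_P \<nu> lam r x + t * \<psi> x) \<and> K \<subseteq> U t"
    proof (intro allI impI conjI)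
      fix t assume t: "t < -sK"
      have "x0 \<in> N t" using C0U[OF t] x0C0 connected_component_subset[of "N t" x0] U_def by auto
      then show "U t \<in> neg_islands (polytope_of \<nu> lam r) (\<lambda>x. g_P \<nu> lam r x + t * \<psi> x)"
        unfolding neg_islands_def components_iff U_def N_def S_def P_def by auto
      show "K \<subseteq> U t" using C0U[OF t] KC0 by auto
    qed
    show "\<forall>t t'. t' < t \<and> t < -sK \<longrightarrow> U t \<subseteq> U t'"
      using mono unfolding U_def by (meson connected_component_mono)
    show "(\<Union>t\<in>{..< -sK}. U t) = interior (polytope_of \<nu> lam r)"
    proof
      show "(\<Union>t\<in>{..< -sK}. U t) \<subseteq> interior (polytope_of \<nu> lam r)"
        using connected_component_subset unfolding U_def N_def S_def P_def by fastforce
      show "interior (polytope_of \<nu> lam r) \<subseteq> (\<Union>t\<in>{..< -sK}. U t)"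
      proof
        fix y assume "y \<in> interior (polytope_of \<nu> lam r)"
        then have y: "y \<in> S" by (simp add: S_def P_def)
        have segS: "closed_segment x0 y \<subseteq> S" using convS x0 y by (simp add: closed_segment_subset)
        obtain Ty where Ty: "\<forall>t<Ty. closed_segment x0 y \<subseteq> N t" using key[OF compact_segment segS] by blast
        define t where "t = min Ty (-sK) - 1"
        have "closed_segment x0 y \<subseteq> U t" unfolding U_def
          by (rule connected_component_maximal) (use Ty t_def in auto)
        then have "y \<in> U t" by auto
        moreover have "t \<in> {..< -sK}" by (simp add: t_def)
        ultimately show "y \<in> (\<Union>t\<in>{..< -sK}. U t)" by blast
      qed
    qed
  qed
qed

end
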